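(* Let $X=\{x_1,\dots,x_n\}$ be a finite biquandle and let $K_1,K_2$ be virtual knotoid diagrams. Then for all $i,k\in\{1,\dots,n\}$, \[\Phi_{X_{ik}}^{\mathbb{Z}}(K_1K_2)=\sum_{j=1}^{n}\Phi_{X_{ij}}^{\mathbb{Z}}(K_1)\,\Phi_{X_{jk}}^{\mathbb{Z}}(K_2).\]
   Context: A virtual knotoid diagram is an immersed oriented open curve in $S^2$ (oriented from the tail endpoint to the head endpoint) with finitely many transversal double points, each a classical crossing (with over/under information) or a virtual crossing. Product: for virtual knotoid diagrams $K_1,K_2$ in $S^2$ with tails $t_1,t_2$ and heads $h_1,h_2$, let $U$ be a disk neighborhood of $h_1$ meeting $K_1$ in a radius and $V$ a disk neighborhood of $t_2$ meeting $K_2$ in a radius. $K_1K_2$ is obtained by gluing $S^2\setminus\mathrm{Int}(U)$ and $S^2\setminus\mathrm{Int}(V)$ along a homeomorphism $\partial U\to\partial V$ sending the point $K_1\cap\partial U$ to $K_2\cap\partial V$; it is a virtual knotoid diagram in $S^2$ with tail $t_1$ and head $h_2$. A biquandle is a set $X$ with binary operations $\underline{\triangleright},\overline{\triangleright}$ such that for all $x,y,z$: $x\underline{\triangleright}x=x\overline{\triangleright}x$; the maps $x\mapsto x\overline{\triangleright}y$, $x\mapsto x\underline{\triangleright}y$ and $(x,y)\mapsto(y\overline{\triangleright}x,\,x\underline{\triangleright}y)$ are invertible; and $(x\underline{\triangleright}y)\underline{\triangleright}(z\underline{\triangleright}y)=(x\underline{\triangleright}z)\underline{\triangleright}(y\overline{\triangleright}z)$,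 $(x\underline{\triangleright}y)\overline{\triangleright}(z\underline{\triangleright}y)=(x\overline{\triangleright}z)\underline{\triangleright}(y\overline{\triangleright}z)$, $(x\overline{\triangleright}y)\overline{\triangleright}(z\overline{\triangleright}y)=(x\overline{\triangleright}z)\overline{\triangleright}(y\underline{\triangleright}z)$. Semi-arcs are the pieces into which crossings cut the curve; the tail (head) semi-arc contains the tail (head). An $X$-coloring assigns an element of $X$ to each semi-arc such that at each classical crossing, drawn with both strands oriented upward, incoming lower-left and lower-right colors $x,y$ give outgoing upper-left and upper-right colors $y\overline{\triangleright}x$ and $x\underline{\triangleright}y$, and at virtual crossings colors pass through unchanged. An $X_{ij}$-coloring is an $X$-coloring with tail semi-arc colored $x_i$ and head semi-arc colored $x_j$; $\Phi_{X_{ij}}^{\mathbb{Z}}(K)$ denotes the number of $X_{ij}$-colorings of $K$. *)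

theory Defs
  imports Main
begin

text \<open>un x y stands for x underline-triangle y, ov x y for x overline-triangle y.\<close>

definition biquandle :: "('x \<Rightarrow> 'x \<Rightarrow> 'x) \<Rightarrow> ('x \<Rightarrow> 'x \<Rightarrow> 'x) \<Rightarrow> bool" where
  "biquandle un ov \<longleftrightarrow>
     (\<forall>x. un x x = ov x x) \<and>
     (\<forall>y. bij (\<lambda>x. ov x y)) \<and>
     (\<forall>y. bij (\<lambda>x. un x y)) \<and>
     bij (\<lambda>(x, y). (ov y x, un x y)) \<and>
     (\<forall>x y z. un (un x y) (un z y) = un (un x z) (ov y z)) \<and>
     (\<forall>x y z. ov (un x y) (un z y) = un (ov x z) (ov y z)) \<and>
     (\<forall>x y z. ov (ov x y) (ov z y) = ov (ov x z) (un y z))"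

text \<open>A virtual knotoid diagram is encoded by its Gauss code: the list of passages through
classical crossings met when travelling from the tail to the head.  A passage is a triple
(c, l, o): c is the label of the classical crossing, l is True iff this strand is the one
entering the crossing at the lower left (when both strands are drawn pointing upward),
and o is True iff this strand is the over-strand.  Virtual crossings do not change colours
and are therefore not recorded.  Semi-arc number i (0 \<le> i \<le> length K) is the piece of
the curve after the i-th passage; semi-arc 0 is the tail semi-arc and semi-arc (length K)
the head semi-arc.\<close>

type_synonym gauss_code = "(nat \<times> bool \<times> bool) list"

definition wf_knotoid :: "gauss_code \<Rightarrow> bool" where
  "wf_knotoid K \<longleftrightarrow>
     (\<forall>c \<in> fst ` set K.
        length (filter (\<lambda>e. fst e = c) K) = 2 \<and>
        (\<exists>p q o1 o2. p < length K \<and> q < length K \<and>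
            K ! p = (c, True, o1) \<and> K ! q = (c, False, o2) \<and> o1 \<noteq> o2))"

text \<open>Number used to shift crossing labels so that the two factors of a product have
disjoint labels.\<close>
definition label_bound :: "gauss_code \<Rightarrow> nat" where
  "label_bound K = (if K = [] then 0 else Suc (Max (fst ` set K)))"

definition knotoid_prod :: "gauss_code \<Rightarrow> gauss_code \<Rightarrow> gauss_code" where
  "knotoid_prod K1 K2 = K1 @ map (\<lambda>(c, l, v). (c + label_bound K1, l, v)) K2"

text \<open>An X-colouring: a list of colours of the semi-arcs, satisfying the crossing rule:
incoming lower-left colour x (semi-arc p) and lower-right colour y (semi-arc q) give
upper-right colour un x y (semi-arc p+1, continuing the lower-left strand) and
upper-left colour ov y x (semi-arc q+1, continuing the lower-right strand).\<close>
definition is_coloring ::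
  "('x \<Rightarrow> 'x \<Rightarrow> 'x) \<Rightarrow> ('x \<Rightarrow> 'x \<Rightarrow> 'x) \<Rightarrow> gauss_code \<Rightarrow> 'x list \<Rightarrow> bool" where
  "is_coloring un ov K cs \<longleftrightarrow>
     length cs = Suc (length K) \<and>
     (\<forall>p q. p < length K \<and> q < length K \<and> fst (K ! p) = fst (K ! q) \<and>
            fst (snd (K ! p)) \<and> \<not> fst (snd (K ! q)) \<longrightarrow>
              cs ! Suc p = un (cs ! p) (cs ! q) \<and> cs ! Suc q = ov (cs ! q) (cs ! p))"

definition Phi ::
  "('x \<Rightarrow> 'x \<Rightarrow> 'x) \<Rightarrow> ('x \<Rightarrow> 'x \<Rightarrow> 'x) \<Rightarrow> 'x \<Rightarrow> 'x \<Rightarrow> gauss_code \<Rightarrow> nat" where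
  "Phi un ov a b K =
     card {cs. is_coloring un ov K cs \<and> cs ! 0 = a \<and> cs ! length K = b}"

end

theory Submission
  imports Defs
begin

lemma lb_less: "p < length K1 \<Longrightarrow> fst (K1!p) < label_bound K1"
proof -
  assume p: "p < length K1"
  then have "K1 \<noteq> []" by auto
  moreover have "fst (K1!p) \<le> Max (fst ` set K1)"
    using p by (intro Max_ge) auto
  ultimately show ?thesis unfolding label_bound_def by simp
qed

lemma sh_fst: "fst ((\<lambda>(c, l, v). (c + b, l, (v::bool))) x) = fst x + (b::nat)"
  by (cases x) auto
lemma sh_snd: "snd ((\<lambda>(c, l, v). (c + b, l, (v::bool))) x) = snd (x::nat\<times>bool\<times>bool)"
  by (cases x) auto

lemma col_len: "is_coloring un ov K cs \<Longrightarrow> length cs = Suc (length K)"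
  unfolding is_coloring_def by (rule conjunct1)

lemma col_prod:
  "is_coloring un ov (knotoid_prod K1 K2) cs \<longleftrightarrow>
     length cs = Suc (length K1 + length K2) \<and>
     is_coloring un ov K1 (take (Suc (length K1)) cs) \<and>
     is_coloring un ov K2 (drop (length K1) cs)"
  (is "?L \<longleftrightarrow> ?R")
proof -
  define n1 where "n1 = length K1"
  define b where "b = label_bound K1"
  define f :: "nat \<times> bool \<times> bool \<Rightarrow> nat \<times> bool \<times> bool" where "f = (\<lambda>(c, l, v). (c + b, l, v))"
  have K: "knotoid_prod K1 K2 = K1 @ map f K2"
    unfolding knotoid_prod_def f_def b_def by simp
  have fst_f: "\<And>x. fst (f x) = fst x + b" unfolding f_def by (rule sh_fst)
  have snd_f: "\<And>x. snd (f x) = snd x" unfolding f_def by (rule sh_snd)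
  have nth1: "\<And>p. p < n1 \<Longrightarrow> (K1 @ map f K2) ! p = K1 ! p"
    unfolding n1_def by (simp add: nth_append)
  have nth2: "\<And>p. p < length K2 \<Longrightarrow> (K1 @ map f K2) ! (n1 + p) = f (K2 ! p)"
    unfolding n1_def by (simp add: nth_append)
  show ?thesis
  proof
    assume L: ?L
    then have len: "length cs = Suc (n1 + length K2)" and
      C: "\<And>p q. p < n1 + length K2 \<Longrightarrow> q < n1 + length K2 \<Longrightarrow>
          fst ((K1 @ map f K2) ! p) = fst ((K1 @ map f K2) ! q) \<Longrightarrow>
          fst (snd ((K1 @ map f K2) ! p)) \<Longrightarrow> \<not> fst (snd ((K1 @ map f K2) ! q)) \<Longrightarrow>
          cs ! Suc p = un (cs ! p) (cs ! q) \<and> cs ! Suc q = ov (cs ! q) (cs ! p)"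
      unfolding is_coloring_def K n1_def by auto
    have c1: "is_coloring un ov K1 (take (Suc n1) cs)"
      unfolding is_coloring_def
    proof (rule conjI[rotated], intro allI impI)
      show "length (take (Suc n1) cs) = Suc (length K1)" using len n1_def by simp
    next
      fix p q assume a: "p < length K1 \<and> q < length K1 \<and> fst (K1 ! p) = fst (K1 ! q) \<and>
             fst (snd (K1 ! p)) \<and> \<not> fst (snd (K1 ! q))"
      then have "cs ! Suc p = un (cs ! p) (cs ! q) \<and> cs ! Suc q = ov (cs ! q) (cs ! p)"
        using C[of p q] nth1[of p] nth1[of q] n1_def by auto
      then show "take (Suc n1) cs ! Suc p = un (take (Suc n1) cs ! p) (take (Suc n1) cs ! q) \<and>
         take (Suc n1) cs ! Suc q = ov (take (Suc n1) cs ! q) (take (Suc n1) cs ! p)"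
        using a n1_def by simp
    qed
    have c2: "is_coloring un ov K2 (drop n1 cs)"
      unfolding is_coloring_def
    proof (rule conjI[rotated], intro allI impI)
      show "length (drop n1 cs) = Suc (length K2)" using len by simp
    next
      fix p q assume a: "p < length K2 \<and> q < length K2 \<and> fst (K2 ! p) = fst (K2 ! q) \<and>
             fst (snd (K2 ! p)) \<and> \<not> fst (snd (K2 ! q))"
      then have "cs ! Suc (n1 + p) = un (cs ! (n1 + p)) (cs ! (n1 + q)) \<and>
                 cs ! Suc (n1 + q) = ov (cs ! (n1 + q)) (cs ! (n1 + p))"
        using C[of "n1 + p" "n1 + q"] nth2[of p] nth2[of q] fst_f snd_f by auto
      then show "drop n1 cs ! Suc p = un (drop n1 cs ! p) (drop n1 cs ! q) \<and>
         drop n1 cs ! Suc q = ov (drop n1 cs ! q) (drop n1 cs ! p)"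
        using a len by simp
    qed
    show ?R using len c1 c2 n1_def by simp
  next
    assume R: ?R
    then have len: "length cs = Suc (n1 + length K2)" using n1_def by simp
    from R have C1: "\<And>p q. p < n1 \<Longrightarrow> q < n1 \<Longrightarrow> fst (K1 ! p) = fst (K1 ! q) \<Longrightarrow>
             fst (snd (K1 ! p)) \<Longrightarrow> \<not> fst (snd (K1 ! q)) \<Longrightarrow>
       take (Suc n1) cs ! Suc p = un (take (Suc n1) cs ! p) (take (Suc n1) cs ! q) \<and>
         take (Suc n1) cs ! Suc q = ov (take (Suc n1) cs ! q) (take (Suc n1) cs ! p)"
      unfolding is_coloring_def n1_def by blast
    from R have C2: "\<And>p q. p < length K2 \<Longrightarrow> q < length K2 \<Longrightarrow> fst (K2 ! p) = fst (K2 ! q) \<Longrightarrow>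
             fst (snd (K2 ! p)) \<Longrightarrow> \<not> fst (snd (K2 ! q)) \<Longrightarrow>
       drop n1 cs ! Suc p = un (drop n1 cs ! p) (drop n1 cs ! q) \<and>
         drop n1 cs ! Suc q = ov (drop n1 cs ! q) (drop n1 cs ! p)"
      unfolding is_coloring_def n1_def by blast
    show ?L unfolding is_coloring_def K
    proof (rule conjI[rotated], intro allI impI)
      show "length cs = Suc (length (K1 @ map f K2))" using len n1_def by simp
    next
      fix p q assume a: "p < length (K1 @ map f K2) \<and> q < length (K1 @ map f K2) \<and>
        fst ((K1 @ map f K2) ! p) = fst ((K1 @ map f K2) ! q) \<and>
        fst (snd ((K1 @ map f K2) ! p)) \<and> \<not> fst (snd ((K1 @ map f K2) ! q))"
      show "cs ! Suc p = un (cs ! p) (cs ! q) \<and> cs ! Suc q = ov (cs ! q) (cs ! p)"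
      proof (cases "p < n1")
        case pT: True
        show ?thesis
        proof (cases "q < n1")
          case True
          then show ?thesis using pT a C1[of p q] nth1[of p] nth1[of q] by auto
        next
          case False
          then obtain q' where q': "q = n1 + q'" "q' < length K2"
            using a n1_def by (metis add_diff_inverse_nat add_less_cancel_left length_append length_map)
          have "fst (K1 ! p) < b" using lb_less pT n1_def b_def by simp
          then show ?thesis using a nth1[of p] pT q' nth2[of q'] fst_f by auto
        qed
      next
        case pF: False
        then obtain p' where p': "p = n1 + p'" "p' < length K2"
          using a n1_def by (metis add_diff_inverse_nat add_less_cancel_left length_append length_map)
        show ?thesis
        proof (cases "q < n1")
          case True
          have "fst (K1 ! q) < b" using lb_less True n1_def b_def by simp
          then show ?thesis using a nth1[of q] True p' nth2[of p'] fst_f by auto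
        next
          case False
          then obtain q' where q': "q = n1 + q'" "q' < length K2"
            using a n1_def by (metis add_diff_inverse_nat add_less_cancel_left length_append length_map)
          have "drop n1 cs ! Suc p' = un (drop n1 cs ! p') (drop n1 cs ! q') \<and>
                drop n1 cs ! Suc q' = ov (drop n1 cs ! q') (drop n1 cs ! p')"
            using C2[of p' q'] a p' q' nth2[of p'] nth2[of q'] fst_f snd_f by auto
          then show ?thesis using p' q' len by simp
        qed
      qed
    qed
  qed
qed

theorem mainTheorem4:
  fixes un ov :: "'x::finite \<Rightarrow> 'x \<Rightarrow> 'x"
    and K1 K2 :: gauss_code
    and xi xk :: 'x
  assumes "biquandle un ov"
    and "wf_knotoid K1" and "wf_knotoid K2"
  shows "Phi un ov xi xk (knotoid_prod K1 K2) =
         (\<Sum>xj\<in>UNIV. Phi un ov xi xj K1 * Phi un ov xj xk K2)"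
proof -
  define n1 where "n1 = length K1"
  define n2 where "n2 = length K2"
  define K where "K = knotoid_prod K1 K2"
  have lenK: "length K = n1 + n2" unfolding K_def knotoid_prod_def n1_def n2_def by simp
  define S where "S = {cs. is_coloring un ov K cs \<and> cs ! 0 = xi \<and> cs ! length K = xk}"
  define Sj where "Sj = (\<lambda>xj. {cs \<in> S. cs ! n1 = xj})"
  define A where "A = (\<lambda>xj. {cs. is_coloring un ov K1 cs \<and> cs ! 0 = xi \<and> cs ! length K1 = xj})"
  define B where "B = (\<lambda>xj. {cs. is_coloring un ov K2 cs \<and> cs ! 0 = xj \<and> cs ! length K2 = xk})"
  have finS: "finite S"
  proof (rule finite_subset)
    show "S \<subseteq> {cs. set cs \<subseteq> UNIV \<and> length cs = Suc (length K)}"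
      unfolding S_def by (auto dest: col_len)
    show "finite {cs. set cs \<subseteq> (UNIV::'x set) \<and> length cs = Suc (length K)}"
      by (rule finite_lists_length_eq) simp
  qed
  have SU: "S = (\<Union>xj\<in>UNIV. Sj xj)" unfolding Sj_def by auto
  have "card S = (\<Sum>xj\<in>UNIV. card (Sj xj))"
    unfolding SU
    by (rule card_UN_disjoint) (use finS in \<open>auto simp: Sj_def\<close>)
  moreover have "card (Sj xj) = card (A xj) * card (B xj)" for xj
  proof -
    have "bij_betw (\<lambda>cs. (take (Suc n1) cs, drop n1 cs)) (Sj xj) (A xj \<times> B xj)"
    proof (rule bij_betw_byWitness[where f'="\<lambda>(c1, c2). c1 @ tl c2"])
      show "\<forall>cs\<in>Sj xj. (\<lambda>(c1, c2). c1 @ tl c2) (take (Suc n1) cs, drop n1 cs) = cs"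
      proof
        fix cs assume "cs \<in> Sj xj"
        have "tl (drop n1 cs) = drop (Suc n1) cs" by (simp add: drop_Suc drop_tl)
        then show "(\<lambda>(c1, c2). c1 @ tl c2) (take (Suc n1) cs, drop n1 cs) = cs"
          by simp
      qed
      show "\<forall>c\<in>A xj \<times> B xj. (\<lambda>cs. (take (Suc n1) cs, drop n1 cs)) ((\<lambda>(c1, c2). c1 @ tl c2) c) = c"
      proof
        fix c assume "c \<in> A xj \<times> B xj"
        then obtain c1 c2 where c: "c = (c1, c2)" "c1 \<in> A xj" "c2 \<in> B xj" by auto
        then have l1: "length c1 = Suc n1" and l2: "length c2 = Suc n2"
          and e: "c1 ! n1 = c2 ! 0"
          unfolding A_def B_def n1_def n2_def by (auto dest: col_len)
        have t: "take (Suc n1) (c1 @ tl c2) = c1" using l1 by simp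
        have "drop n1 (c1 @ tl c2) = drop n1 c1 @ tl c2" using l1 by simp
        also have "drop n1 c1 = [c1 ! n1]" using l1
          using Cons_nth_drop_Suc[of n1 c1] by simp
        also have "[c1 ! n1] @ tl c2 = c2" using e l2
          by (cases c2) auto
        finally show "(\<lambda>cs. (take (Suc n1) cs, drop n1 cs)) ((\<lambda>(c1, c2). c1 @ tl c2) c) = c"
          using t c by simp
      qed
      show "(\<lambda>cs. (take (Suc n1) cs, drop n1 cs)) ` Sj xj \<subseteq> A xj \<times> B xj"
      proof
        fix y assume "y \<in> (\<lambda>cs. (take (Suc n1) cs, drop n1 cs)) ` Sj xj"
        then obtain cs where y: "y = (take (Suc n1) cs, drop n1 cs)" and cs: "cs \<in> Sj xj" by auto
        then have col: "is_coloring un ov K cs" and h: "cs ! 0 = xi" "cs ! (n1 + n2) = xk" "cs ! n1 = xj"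
          unfolding Sj_def S_def lenK by auto
        from col have L: "length cs = Suc (n1 + n2)" and c1: "is_coloring un ov K1 (take (Suc n1) cs)"
          and c2: "is_coloring un ov K2 (drop n1 cs)"
          unfolding K_def col_prod n1_def n2_def by auto
        show "y \<in> A xj \<times> B xj" unfolding y A_def B_def
          using c1 c2 h L n1_def n2_def by simp
      qed
      show "(\<lambda>(c1, c2). c1 @ tl c2) ` (A xj \<times> B xj) \<subseteq> Sj xj"
      proof
        fix y assume "y \<in> (\<lambda>(c1, c2). c1 @ tl c2) ` (A xj \<times> B xj)"
        then obtain c1 c2 where y: "y = c1 @ tl c2" and c: "c1 \<in> A xj" "c2 \<in> B xj" by auto
        then have l1: "length c1 = Suc n1" and l2: "length c2 = Suc n2"
          and e: "c1 ! n1 = c2 ! 0"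
          unfolding A_def B_def n1_def n2_def by (auto dest: col_len)
        have t: "take (Suc n1) y = c1" using l1 y by simp
        have "drop n1 y = drop n1 c1 @ tl c2" using l1 y by simp
        also have "drop n1 c1 = [c1 ! n1]" using l1
          using Cons_nth_drop_Suc[of n1 c1] by simp
        also have "[c1 ! n1] @ tl c2 = c2" using e l2
          by (cases c2) auto
        finally have d: "drop n1 y = c2" .
        have ly: "length y = Suc (n1 + n2)" using y l1 l2 by simp
        have col: "is_coloring un ov K y"
          unfolding K_def col_prod using ly t d c n1_def n2_def A_def B_def by simp
        have a1: "c1 ! 0 = xi" "c1 ! n1 = xj" using c(1) unfolding A_def n1_def by auto
        have b1: "c2 ! n2 = xk" using c(2) unfolding B_def n2_def by auto
        have y0: "y ! 0 = xi" using y l1 a1 by (simp add: nth_append)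
        have yn1: "y ! n1 = xj" using y l1 a1 by (simp add: nth_append)
        have "y ! (n1 + n2) = drop n1 y ! n2" using ly by simp
        then have yN: "y ! (n1 + n2) = xk" using d b1 by simp
        show "y \<in> Sj xj" unfolding Sj_def S_def lenK using col y0 yn1 yN by simp
      qed
    qed
    then have "card (Sj xj) = card (A xj \<times> B xj)" by (rule bij_betw_same_card)
    then show ?thesis by (simp add: card_cartesian_product)
  qed
  ultimately show ?thesis
    unfolding Phi_def S_def A_def B_def K_def by simp
qed

end
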